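(* Let $n\ge2$ and $\Delta\subset B_n$ a proper ideal such that for every $A\subseteq[1,n]$, $A\in\Delta$ if and only if $[1,n]\setminus A\notin\Delta$. Then $\mathrm{Bier}(B_n,\Delta)$ is centrally symmetric, with involution exchanging the vertex $([\{x\}],[1,n])$-type vertex $(\{x\},[1,n])$ and the vertex $(\emptyset,[1,n]\setminus\{x\})$ for each $x\in[1,n]$.
   Context: $B_n$ is the Boolean lattice of subsets of $[1,n]$. A proper ideal $\Delta\subset B_n$ is a nonempty family of subsets of $[1,n]$ closed under taking subsets with $[1,n]\notin\Delta$. The Bier sphere $\mathrm{Bier}(B_n,\Delta)$ is the simplicial complex whose faces are the pairs $(B,C)$ with $B\subsetneq C\subseteq[1,n]$, $B\in\Delta$, $C\notin\Delta$, with $(B',C')$ a face of $(B,C)$ iff $B'\subseteq B$ and $C\subseteq C'$; its vertices are the pairs $(\{x\},[1,n])$ with $\{x\}\in\Delta$ and $(\emptyset,[1,n]\setminus\{x\})$ with $[1,n]\setminus\{x\}\notin\Delta$. A simplicial complex $\Gamma$ with vertex set $V$ is centrally symmetric if there is a fixed-point-free involution $\alpha$ of $V$ such that $\alpha(F)$ is a face for every face $F$, and $\{v,\alpha(v)\}$ is not a face for every $v\in V$. *)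

theory Defs
  imports Main
begin

definition proper_ideal :: "nat \<Rightarrow> nat set set \<Rightarrow> bool" where
  "proper_ideal n \<Delta> \<longleftrightarrow> \<Delta> \<noteq> {} \<and> \<Delta> \<subseteq> Pow {1..n}
     \<and> (\<forall>A\<in>\<Delta>. \<forall>B. B \<subseteq> A \<longrightarrow> B \<in> \<Delta>) \<and> {1..n} \<notin> \<Delta>"

text \<open>Faces of Bier(B_n, Delta) as pairs (B,C).\<close>
definition bier_pairs :: "nat \<Rightarrow> nat set set \<Rightarrow> (nat set \<times> nat set) set" where
  "bier_pairs n \<Delta> = {(B, C). B \<subset> C \<and> C \<subseteq> {1..n} \<and> B \<in> \<Delta> \<and> C \<notin> \<Delta>}"

definition bier_vertices :: "nat \<Rightarrow> nat set set \<Rightarrow> (nat set \<times> nat set) set" where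
  "bier_vertices n \<Delta> =
     {({x}, {1..n}) | x. x \<in> {1..n} \<and> {x} \<in> \<Delta>}
   \<union> {({}, {1..n} - {x}) | x. x \<in> {1..n} \<and> {1..n} - {x} \<notin> \<Delta>}"

definition bier_vertex_set :: "nat \<Rightarrow> nat set set \<Rightarrow> nat set \<times> nat set \<Rightarrow> (nat set \<times> nat set) set" where
  "bier_vertex_set n \<Delta> F = {v \<in> bier_vertices n \<Delta>. fst v \<subseteq> fst F \<and> snd F \<subseteq> snd v}"

definition bier_complex :: "nat \<Rightarrow> nat set set \<Rightarrow> (nat set \<times> nat set) set set" where
  "bier_complex n \<Delta> = bier_vertex_set n \<Delta> ` bier_pairs n \<Delta>"

definition centrally_symmetric_via :: "'v set \<Rightarrow> 'v set set \<Rightarrow> ('v \<Rightarrow> 'v) \<Rightarrow> bool" where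
  "centrally_symmetric_via V K \<alpha> \<longleftrightarrow>
     (\<forall>v\<in>V. \<alpha> v \<in> V \<and> \<alpha> (\<alpha> v) = v \<and> \<alpha> v \<noteq> v)
   \<and> (\<forall>F\<in>K. \<alpha> ` F \<in> K)
   \<and> (\<forall>v\<in>V. {v, \<alpha> v} \<notin> K)"

end

theory Submission
  imports Defs
begin

lemma vs_char:
  assumes PI: "proper_ideal n \<Delta>" and F: "(B, C) \<in> bier_pairs n \<Delta>"
  shows "bier_vertex_set n \<Delta> (B, C) =
    (\<lambda>x. ({x}, {1..n})) ` B \<union> (\<lambda>x. ({}, {1..n} - {x})) ` ({1..n} - C)"
proof -
  from F have BC: "B \<subset> C" "C \<subseteq> {1..n}" "B \<in> \<Delta>" "C \<notin> \<Delta>" by (auto simp: bier_pairs_def)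
  from PI have cl: "\<And>A D. A \<in> \<Delta> \<Longrightarrow> D \<subseteq> A \<Longrightarrow> D \<in> \<Delta>" by (auto simp: proper_ideal_def)
  show ?thesis
  proof (rule set_eqI, rule iffI)
    fix v assume "v \<in> bier_vertex_set n \<Delta> (B, C)"
    then have vv: "v \<in> bier_vertices n \<Delta>" "fst v \<subseteq> B" "C \<subseteq> snd v" by (auto simp: bier_vertex_set_def)
    from vv(1) consider x where "x \<in> {1..n}" "v = ({x}, {1..n})" | x where "x \<in> {1..n}" "v = ({}, {1..n} - {x})"
      unfolding bier_vertices_def by blast
    then show "v \<in> (\<lambda>x. ({x}, {1..n})) ` B \<union> (\<lambda>x. ({}, {1..n} - {x})) ` ({1..n} - C)"
    proof cases
      case (1 x) then show ?thesis using vv by auto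
    next
      case (2 x) then have "x \<notin> C" using vv by auto
      then show ?thesis using 2 by blast
    qed
  next
    fix v assume v: "v \<in> (\<lambda>x. ({x}, {1..n})) ` B \<union> (\<lambda>x. ({}, {1..n} - {x})) ` ({1..n} - C)"
    show "v \<in> bier_vertex_set n \<Delta> (B, C)"
    proof (cases "v \<in> (\<lambda>x. ({x}, {1..n})) ` B")
      case True
      then obtain x where x: "x \<in> B" "v = ({x}, {1..n})" by blast
      have "{x} \<in> \<Delta>" using cl[OF BC(3)] x by auto
      moreover have "x \<in> {1..n}" using x BC by auto
      ultimately show ?thesis using x BC by (auto simp: bier_vertex_set_def bier_vertices_def)
    next
      case False
      then obtain x where x: "x \<in> {1..n}" "x \<notin> C" "v = ({}, {1..n} - {x})" using v by blast
      have "{1..n} - {x} \<notin> \<Delta>" using cl[of "{1..n} - {x}" C] BC x by auto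
      then show ?thesis using x BC by (auto simp: bier_vertex_set_def bier_vertices_def)
    qed
  qed
qed

theorem proposition15:
  fixes n :: nat and \<Delta> :: "nat set set"
  assumes "n \<ge> 2"
    and "proper_ideal n \<Delta>"
    and "\<forall>A. A \<subseteq> {1..n} \<longrightarrow> (A \<in> \<Delta> \<longleftrightarrow> {1..n} - A \<notin> \<Delta>)"
  shows "\<exists>\<alpha>. centrally_symmetric_via (bier_vertices n \<Delta>) (bier_complex n \<Delta>) \<alpha>
           \<and> (\<forall>x\<in>{1..n}. {x} \<in> \<Delta> \<longrightarrow>
                 \<alpha> ({x}, {1..n}) = ({}, {1..n} - {x}) \<and> \<alpha> ({}, {1..n} - {x}) = ({x}, {1..n}))"
proof -
  define N where "N = {1..n::nat}"
  define \<alpha> where "\<alpha> = (\<lambda>(B::nat set, C::nat set). if B = {} then (N - C, N) else ({}, N - B))"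
  have PI: "proper_ideal n \<Delta>" by fact
  have sd: "\<And>A. A \<subseteq> N \<Longrightarrow> A \<in> \<Delta> \<longleftrightarrow> N - A \<notin> \<Delta>" using assms(3) unfolding N_def by blast
  have sub: "\<Delta> \<subseteq> Pow N" using PI by (auto simp: proper_ideal_def N_def)
  have a1: "\<alpha> ({x}, N) = ({}, N - {x})" for x by (simp add: \<alpha>_def)
  have a2: "x \<in> N \<Longrightarrow> \<alpha> ({}, N - {x}) = ({x}, N)" for x by (auto simp: \<alpha>_def)
  have V: "bier_vertices n \<Delta> = {({x}, N) | x. x \<in> N \<and> {x} \<in> \<Delta>} \<union> {({}, N - {x}) | x. x \<in> N \<and> {x} \<in> \<Delta>}"
  proof -
    have "x \<in> N \<Longrightarrow> (N - {x} \<notin> \<Delta>) = ({x} \<in> \<Delta>)" for x using sd[of "{x}"] by auto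
    then show ?thesis unfolding bier_vertices_def N_def[symmetric] by blast
  qed
  have P1: "\<forall>v\<in>bier_vertices n \<Delta>. \<alpha> v \<in> bier_vertices n \<Delta> \<and> \<alpha> (\<alpha> v) = v \<and> \<alpha> v \<noteq> v"
    unfolding V using a1 a2 by auto
  have P2: "\<forall>F\<in>bier_complex n \<Delta>. \<alpha> ` F \<in> bier_complex n \<Delta>"
  proof
    fix F assume "F \<in> bier_complex n \<Delta>"
    then obtain B C where BC: "(B, C) \<in> bier_pairs n \<Delta>" and F: "F = bier_vertex_set n \<Delta> (B, C)"
      unfolding bier_complex_def by auto
    from BC have h: "B \<subset> C" "C \<subseteq> N" "B \<in> \<Delta>" "C \<notin> \<Delta>" by (auto simp: bier_pairs_def N_def)
    have BN: "B \<subseteq> N" using h by auto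
    have "N - C \<in> \<Delta>" using sd[OF h(2)] h(4) by simp
    moreover have "N - B \<notin> \<Delta>" using sd[of "N - B"] h(3) BN by (simp add: double_diff)
    moreover have "N - C \<subset> N - B" using h by auto
    ultimately have BC': "(N - C, N - B) \<in> bier_pairs n \<Delta>" by (auto simp: bier_pairs_def N_def)
    have "\<alpha> ` F = (\<lambda>x. ({}, N - {x})) ` B \<union> (\<lambda>x. ({x}, N)) ` (N - C)"
      unfolding F vs_char[OF PI BC] N_def[symmetric] image_Un image_image
      using a1 a2 BN by (auto intro!: image_cong)
    also have "\<dots> = bier_vertex_set n \<Delta> (N - C, N - B)"
      unfolding vs_char[OF PI BC'] N_def[symmetric] using BN by (auto simp: double_diff)
    finally show "\<alpha> ` F \<in> bier_complex n \<Delta>" using BC' unfolding bier_complex_def by blast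
  qed
  have P3: "\<forall>v\<in>bier_vertices n \<Delta>. {v, \<alpha> v} \<notin> bier_complex n \<Delta>"
  proof (intro ballI notI)
    fix v assume v: "v \<in> bier_vertices n \<Delta>" and K: "{v, \<alpha> v} \<in> bier_complex n \<Delta>"
    then obtain B C where BC: "(B, C) \<in> bier_pairs n \<Delta>" and F: "{v, \<alpha> v} = bier_vertex_set n \<Delta> (B, C)"
      unfolding bier_complex_def by auto
    from BC have h: "B \<subset> C" "C \<subseteq> N" by (auto simp: bier_pairs_def N_def)
    from v obtain x where x: "x \<in> N" "v = ({x}, N) \<or> v = ({}, N - {x})" unfolding V by blast
    have "{({x}, N), ({}, N - {x})} \<subseteq> bier_vertex_set n \<Delta> (B, C)"
      using x F a1 a2 by auto
    then have "x \<in> B" "C \<subseteq> N - {x}" by (auto simp: bier_vertex_set_def)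
    then show False using h by auto
  qed
  show ?thesis
    apply (rule exI[of _ \<alpha>])
    using P1 P2 P3 a1 a2 unfolding centrally_symmetric_via_def N_def by auto
qed

end
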